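(* With $Y_i$, $D_i$ and $T_{in}^{-1}$ as described in the context, for $1\le i<n$, $$[D_i,x_n^{-1}]=t^{2n-i-1}(t^{-1}-1)\,x_i^{-1}\,x_n^{-1}\,T_{in}^{-1}\,Y_i,$$ where $x_n^{-1}$ denotes the operator of multiplication by $x_n^{-1}$.
   Context: Let $n\ge2$, let $q,t$ be generic parameters, and let operators act on Laurent polynomials in $x=(x_1,\dots,x_n)$ with coefficients in $\mathbb{Q}(q,t)$. Let $s_i$ interchange $x_i,x_{i+1}$, and $(\tau_if)(x)=f(x_1,\dots,qx_i,\dots,x_n)$. Let $T_i=t+\frac{tx_i-x_{i+1}}{x_i-x_{i+1}}(s_i-1)$, $1\le i\le n-1$ (invertible, $T_i^{-1}=t^{-1}-1+t^{-1}T_i$). Let $\omega=s_{n-1}\cdots s_1\tau_1$ and $Y_i=t^{-n+i}T_i\cdots T_{n-1}\,\omega\,T_1^{-1}\cdots T_{i-1}^{-1}$. For $i<j$ let $T_{ij}^{-1}=T_i^{-1}\cdots T_{j-2}^{-1}T_{j-1}^{-1}T_{j-2}^{-1}\cdots T_i^{-1}$. The $q$-Dunkl operators are $D_i=x_i^{-1}\bigl(1-t^{n-1}[1+(t^{-1}-1)\sum_{j=i+1}^n t^{j-i}T_{ij}^{-1}]Y_i\bigr)$. *)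

theory Defs
  imports Main "HOL-Library.Poly_Mapping" "HOL-Computational_Algebra.Polynomial"
    "HOL-Computational_Algebra.Fraction_Field"
begin

text \<open>Coefficient field Q(q,t), realised as the fraction field of Q[t][q]
  (q outer variable, t inner variable); q and t are algebraically independent.\<close>
type_synonym K = "rat poly poly fract"

definition qp :: K where "qp = Fract [:0, 1:] 1"
definition tp :: K where "tp = Fract [:[:0, 1:]:] 1"

text \<open>Laurent polynomials: finitely supported maps from integer exponent
  vectors (finitely supported, indexed by nat) to coefficients.\<close>
type_synonym lpoly = "(nat \<Rightarrow>\<^sub>0 int) \<Rightarrow>\<^sub>0 K"
type_synonym lop = "lpoly \<Rightarrow> lpoly"

definition xpow :: "nat \<Rightarrow> int \<Rightarrow> lpoly" where
  "xpow i e = Poly_Mapping.single (Poly_Mapping.single i e) 1"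

definition scal :: "K \<Rightarrow> lpoly \<Rightarrow> lpoly" where
  "scal c f = Poly_Mapping.single 0 c * f"

definition swap_exp :: "nat \<Rightarrow> (nat \<Rightarrow>\<^sub>0 int) \<Rightarrow> (nat \<Rightarrow>\<^sub>0 int)" where
  "swap_exp i a = Abs_poly_mapping (\<lambda>j. Poly_Mapping.lookup a (if j = i then Suc i else if j = Suc i then i else j))"

definition s_op :: "nat \<Rightarrow> lop" where
  "s_op i f = Abs_poly_mapping (\<lambda>a. Poly_Mapping.lookup f (swap_exp i a))"

definition tau_op :: "nat \<Rightarrow> lop" where
  "tau_op i f = Abs_poly_mapping (\<lambda>a. qp powi (Poly_Mapping.lookup a i) * Poly_Mapping.lookup f a)"

definition ddiv :: "nat \<Rightarrow> lop" where
  "ddiv i g = (THE h. (xpow i 1 - xpow (Suc i) 1) * h = g)"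

definition T_op :: "nat \<Rightarrow> lop" where
  "T_op i f = scal tp f
     + (scal tp (xpow i 1) - xpow (Suc i) 1) * ddiv i (s_op i f - f)"

definition Tinv_op :: "nat \<Rightarrow> lop" where
  "Tinv_op i f = scal (inverse tp - 1) f + scal (inverse tp) (T_op i f)"

text \<open>operator product A_1 A_2 ... A_k (A_k applied first)\<close>
definition opprod :: "lop list \<Rightarrow> lop" where
  "opprod As = foldr (\<circ>) As id"

definition omega :: "nat \<Rightarrow> lop" where
  "omega n = opprod (map s_op (rev [1..<n]) @ [tau_op 1])"

definition Y_op :: "nat \<Rightarrow> nat \<Rightarrow> lop" where
  "Y_op n i f = scal (tp powi (int i - int n))
     (opprod (map T_op [i..<n] @ [omega n] @ map Tinv_op [1..<i]) f)"

definition Tinv_ij :: "nat \<Rightarrow> nat \<Rightarrow> lop" where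
  "Tinv_ij i j = opprod (map Tinv_op [i..<j - 1] @ [Tinv_op (j - 1)]
                        @ map Tinv_op (rev [i..<j - 1]))"

definition D_op :: "nat \<Rightarrow> nat \<Rightarrow> lop" where
  "D_op n i f = xpow i (-1) *
     (f - scal (tp ^ (n - 1))
            (Y_op n i f + scal (inverse tp - 1)
               (\<Sum>j = i + 1..n. scal (tp ^ (j - i)) (Tinv_ij i j (Y_op n i f)))))"

definition in_vars :: "nat \<Rightarrow> lpoly \<Rightarrow> bool" where
  "in_vars n f \<longleftrightarrow> (\<forall>a \<in> Poly_Mapping.keys f. Poly_Mapping.keys a \<subseteq> {1..n})"

end

theory Submission imports Defs begin

abbreviation lk where "lk \<equiv> Poly_Mapping.lookup"
abbreviation Cs :: "K \<Rightarrow> lpoly" where "Cs c \<equiv> Poly_Mapping.single 0 c"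

lemma lookup_single_mult:
  fixes f :: "('a::ab_group_add) \<Rightarrow>\<^sub>0 ('b::comm_semiring_1)"
  shows "lk (Poly_Mapping.single a c * f) b = c * lk f (b - a)"
proof -
  have "\<And>q. (b = a + q) = (q = b - a)" by (auto simp: algebra_simps)
  then show ?thesis by (simp add: lookup_mult lookup_single when_mult mult_when)
qed

lemma tp_nz: "tp \<noteq> 0" unfolding tp_def by (simp add: eq_fract Zero_fract_def)

lemma C_mult: "Cs a * Cs b = Cs (a * b)" by (simp add: mult_single)
lemma C_add: "Cs (a + b) = Cs a + Cs b" by (simp add: single_add)
lemma C_diff: "Cs (a - b) = Cs a - Cs b" by (simp add: single_diff)
lemma C_one: "Cs 1 = 1" by (simp add: one_poly_mapping_def)
lemma C_inv: "Cs tp * Cs (inverse tp) = 1"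
  by (simp add: C_mult tp_nz C_one)
lemma C_pow: "Cs (a ^ m) = Cs a ^ m"
  by (induction m) (simp_all add: C_one C_mult[symmetric])

lemma xpow_mult: "xpow i a * xpow i b = xpow i (a + b)"
  by (simp add: xpow_def mult_single single_add)
lemma xpow_zero: "xpow i 0 = 1"
  by (simp add: xpow_def one_poly_mapping_def)
lemma xpow_inv: "xpow i 1 * xpow i (-1) = 1"
  by (simp add: xpow_mult xpow_zero)
lemma xpow_nat: "xpow i (int m) = xpow i 1 ^ m"
proof (induction m)
  case 0 then show ?case by (simp add: xpow_zero)
next
  case (Suc m)
  have "xpow i (int (Suc m)) = xpow i 1 * xpow i (int m)" by (simp add: xpow_mult add.commute)
  then show ?case using Suc by simp
qed

lemma update_eq_single_add:
  assumes "a \<notin> Poly_Mapping.keys f"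
  shows "Poly_Mapping.update a b f = Poly_Mapping.single a b + f"
  using assms by (intro poly_mapping_eqI) (auto simp: lookup_update lookup_add lookup_single in_keys_iff)

lemma pm_induct[case_names zero add]:
  assumes "P 0" and "\<And>f a b. P f \<Longrightarrow> P (Poly_Mapping.single a b + f)"
  shows "P f"
  apply (induction f rule: update_induct)
  using assms by (auto simp: update_eq_single_add)

definition sig :: "nat \<Rightarrow> nat \<Rightarrow> nat" where
  "sig k j = (if j = k then Suc k else if j = Suc k then k else j)"

lemma sig_sig[simp]: "sig k (sig k j) = j" by (auto simp: sig_def)

lemma lookup_swap_exp: "lk (swap_exp k a) j = lk a (sig k j)"
proof -
  have "{j. lk a (sig k j) \<noteq> 0} \<subseteq> sig k ` Poly_Mapping.keys a"
    by (auto simp: in_keys_iff intro!: image_eqI[where x="sig k _"])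
  then have "finite {j. lk a (sig k j) \<noteq> 0}" by (rule finite_subset) simp
  then show ?thesis unfolding swap_exp_def sig_def by simp
qed

lemma swap_exp_swap_exp[simp]: "swap_exp k (swap_exp k a) = a"
  by (rule poly_mapping_eqI) (simp add: lookup_swap_exp)
lemma swap_exp_add: "swap_exp k (a + b) = swap_exp k a + swap_exp k b"
  by (rule poly_mapping_eqI) (simp add: lookup_swap_exp lookup_add)
lemma swap_exp_diff: "swap_exp k (a - b) = swap_exp k a - swap_exp k b"
  by (rule poly_mapping_eqI) (simp add: lookup_swap_exp lookup_minus)
lemma swap_exp_single: "swap_exp k (Poly_Mapping.single j m) = Poly_Mapping.single (sig k j) m"
  by (rule poly_mapping_eqI) (auto simp: lookup_swap_exp lookup_single when_def sig_def)
lemma swap_exp_zero[simp]: "swap_exp k 0 = 0"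
  by (rule poly_mapping_eqI) (simp add: lookup_swap_exp)

lemma lookup_s_op: "lk (s_op k f) a = lk f (swap_exp k a)"
proof -
  have "{a. lk f (swap_exp k a) \<noteq> 0} \<subseteq> swap_exp k ` Poly_Mapping.keys f"
    by (auto simp: in_keys_iff intro!: image_eqI[where x="swap_exp k _"])
  then have "finite {a. lk f (swap_exp k a) \<noteq> 0}" by (rule finite_subset) simp
  then show ?thesis unfolding s_op_def by simp
qed

lemma s_add: "s_op k (f + g) = s_op k f + s_op k g"
  by (rule poly_mapping_eqI) (simp add: lookup_s_op lookup_add)
lemma s_diff: "s_op k (f - g) = s_op k f - s_op k g"
  by (rule poly_mapping_eqI) (simp add: lookup_s_op lookup_minus)
lemma s_zero: "s_op k 0 = 0"
  by (rule poly_mapping_eqI) (simp add: lookup_s_op)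
lemma s_s: "s_op k (s_op k f) = f"
  by (rule poly_mapping_eqI) (simp add: lookup_s_op)
lemma s_single: "s_op k (Poly_Mapping.single a c) = Poly_Mapping.single (swap_exp k a) c"
proof (rule poly_mapping_eqI)
  fix b show "lk (s_op k (Poly_Mapping.single a c)) b = lk (Poly_Mapping.single (swap_exp k a) c) b"
    by (simp add: lookup_s_op lookup_single when_def) (metis swap_exp_swap_exp)
qed
lemma s_single_mult: "s_op k (Poly_Mapping.single a c * g) = Poly_Mapping.single (swap_exp k a) c * s_op k g"
proof (rule poly_mapping_eqI)
  fix b
  have "swap_exp k (b - swap_exp k a) = swap_exp k b - a"
    by (simp add: swap_exp_diff)
  then show "lk (s_op k (Poly_Mapping.single a c * g)) b = lk (Poly_Mapping.single (swap_exp k a) c * s_op k g) b"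
    by (simp add: lookup_s_op lookup_single_mult)
qed
lemma s_mult: "s_op k (f * g) = s_op k f * s_op k g"
proof (induction f rule: pm_induct)
  case zero then show ?case by (simp add: s_zero)
next
  case (add f a b)
  then show ?case by (simp add: distrib_right s_add s_single_mult s_single)
qed
lemma s_C: "s_op k (Cs c) = Cs c"
  by (simp add: s_single)
lemma s_one: "s_op k 1 = 1"
  using s_C[of k 1] by (simp add: C_one)
lemma s_xpow: "s_op k (xpow j m) = xpow (sig k j) m"
  by (simp add: xpow_def s_single swap_exp_single)
lemma s_minus: "s_op k (- f) = - s_op k f"
  using s_diff[of k 0 f] by (simp add: s_zero)

definition dk :: "nat \<Rightarrow> lpoly" where "dk k = xpow k 1 - xpow (Suc k) 1"

lemma dk_nz: "dk k \<noteq> 0"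
proof
  assume "dk k = 0"
  then have "lk (dk k) (Poly_Mapping.single k 1) = 0" by simp
  moreover have "Poly_Mapping.single k (1::int) \<noteq> Poly_Mapping.single (Suc k) 1"
    by (metis inj_single injD n_not_Suc_n single_one lookup_single_eq lookup_single_not_eq zero_neq_one)
  ultimately show False
    by (simp add: dk_def xpow_def lookup_minus lookup_single when_def)
qed

lemma dk_cancel: "dk k * a = dk k * b \<Longrightarrow> a = b"
  using dk_nz by simp

lemma dvd_pow_diff: "dk k dvd (xpow k 1 ^ m - xpow (Suc k) 1 ^ m)"
proof -
  have "xpow k 1 ^ m - xpow (Suc k) 1 ^ m = dk k * (\<Sum>i<m. xpow (Suc k) 1^(m - Suc i) * xpow k 1^i)"
    unfolding dk_def by (rule power_diff_sumr2)
  then show ?thesis by simp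
qed

lemma dvd_monom_diff: "dk k dvd (xpow k r * xpow (Suc k) p - xpow k p * xpow (Suc k) r)"
proof (cases "r \<le> p")
  case True
  define m where "m = nat (p - r)"
  have p: "p = r + int m" using True m_def by simp
  have "xpow k r * xpow (Suc k) p - xpow k p * xpow (Suc k) r
      = - (xpow k r * xpow (Suc k) r * (xpow k 1 ^ m - xpow (Suc k) 1 ^ m))"
    unfolding p by (simp add: xpow_mult[symmetric] xpow_nat algebra_simps)
  then show ?thesis using dvd_pow_diff by (simp add: dvd_mult)
next
  case False
  define m where "m = nat (r - p)"
  have p: "r = p + int m" using False m_def by simp
  have "xpow k r * xpow (Suc k) p - xpow k p * xpow (Suc k) r
      = xpow k p * xpow (Suc k) p * (xpow k 1 ^ m - xpow (Suc k) 1 ^ m)"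
    unfolding p by (simp add: xpow_mult[symmetric] xpow_nat algebra_simps)
  then show ?thesis using dvd_pow_diff by (simp add: dvd_mult)
qed

lemma dvd_single: "dk k dvd (s_op k (Poly_Mapping.single a c) - Poly_Mapping.single a c)"
proof -
  define p where "p = lk a k"
  define r where "r = lk a (Suc k)"
  define a' where "a' = a - Poly_Mapping.single k p - Poly_Mapping.single (Suc k) r"
  have a: "a = a' + Poly_Mapping.single k p + Poly_Mapping.single (Suc k) r"
    by (simp add: a'_def)
  have sa': "swap_exp k a' = a'"
    by (rule poly_mapping_eqI)
       (auto simp: lookup_swap_exp a'_def lookup_minus lookup_single when_def sig_def p_def r_def)
  have sa: "swap_exp k a = a' + Poly_Mapping.single k r + Poly_Mapping.single (Suc k) p"
    unfolding a by (simp add: swap_exp_add swap_exp_single sa' sig_def)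
  have e: "\<And>b d. Poly_Mapping.single (a' + Poly_Mapping.single k b + Poly_Mapping.single (Suc k) (d::int)) c
      = Cs c * Poly_Mapping.single a' 1 * (xpow k b * xpow (Suc k) d)"
    by (simp add: xpow_def mult_single add.assoc)
  have "s_op k (Poly_Mapping.single a c) - Poly_Mapping.single a c
     = Poly_Mapping.single (a' + Poly_Mapping.single k r + Poly_Mapping.single (Suc k) p) c
       - Poly_Mapping.single (a' + Poly_Mapping.single k p + Poly_Mapping.single (Suc k) r) c"
    apply (subst (2) a) apply (simp only: s_single sa) done
  also have "\<dots> = Cs c * Poly_Mapping.single a' 1 * (xpow k r * xpow (Suc k) p - xpow k p * xpow (Suc k) r)"
    by (simp only: e right_diff_distrib)
  finally have "s_op k (Poly_Mapping.single a c) - Poly_Mapping.single a c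
     = Cs c * Poly_Mapping.single a' 1 * (xpow k r * xpow (Suc k) p - xpow k p * xpow (Suc k) r)" .
  then show ?thesis using dvd_monom_diff by (metis dvd_mult)
qed

lemma dvd_all: "dk k dvd (s_op k f - f)"
proof (induction f rule: pm_induct)
  case zero then show ?case by (simp add: s_zero)
next
  case (add f a b)
  have "s_op k (Poly_Mapping.single a b + f) - (Poly_Mapping.single a b + f)
    = (s_op k (Poly_Mapping.single a b) - Poly_Mapping.single a b) + (s_op k f - f)"
    by (simp add: s_add)
  then show ?case using add dvd_single by (metis dvd_add)
qed

lemma ddiv_spec: "dk k * ddiv k (s_op k f - f) = s_op k f - f"
proof -
  obtain h where h: "s_op k f - f = dk k * h" using dvd_all by (metis dvdE)
  have "\<exists>!h. (xpow k 1 - xpow (Suc k) 1) * h = s_op k f - f"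
    using h dk_cancel unfolding dk_def by metis
  then show ?thesis unfolding ddiv_def dk_def by (rule theI')
qed

lemma T_eq: "dk k * T_op k f = Cs tp * dk k * f + (Cs tp * xpow k 1 - xpow (Suc k) 1) * (s_op k f - f)"
proof -
  have "dk k * T_op k f = Cs tp * dk k * f + (Cs tp * xpow k 1 - xpow (Suc k) 1) * (dk k * ddiv k (s_op k f - f))"
    unfolding T_op_def scal_def dk_def by (simp add: algebra_simps)
  then show ?thesis by (simp add: ddiv_spec)
qed

lemma sig_k: "sig k k = Suc k" and sig_Sk: "sig k (Suc k) = k" by (auto simp: sig_def)

lemma s_dk: "s_op k (dk k) = - dk k"
  by (simp add: dk_def s_diff s_xpow sig_k sig_Sk)

lemma T_sym: assumes "s_op k g = g" shows "T_op k (g * f) = g * T_op k f"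
proof (rule dk_cancel)
  have "dk k * (g * T_op k f) = g * (dk k * T_op k f)" by (simp add: ac_simps)
  also have "\<dots> = g * (Cs tp * dk k * f + (Cs tp * xpow k 1 - xpow (Suc k) 1) * (s_op k f - f))"
    by (simp add: T_eq)
  also have "\<dots> = dk k * T_op k (g * f)"
    by (simp add: T_eq s_mult assms algebra_simps)
  finally show "dk k * T_op k (g * f) = dk k * (g * T_op k f)" by (rule sym)
qed

lemma T_add: "T_op k (f + g) = T_op k f + T_op k g"
proof (rule dk_cancel)
  show "dk k * T_op k (f + g) = dk k * (T_op k f + T_op k g)"
    by (simp add: distrib_left T_eq s_add algebra_simps)
qed

lemma T_C: "T_op k (Cs c * f) = Cs c * T_op k f"
  by (rule T_sym) (simp add: s_C)

lemma T_quad: "T_op k (T_op k f) = (Cs tp - 1) * T_op k f + Cs tp * f"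
proof -
  let ?u = "xpow k 1" and ?v = "xpow (Suc k) 1" and ?t = "Cs tp"
  have E1: "dk k * T_op k f = ?t * dk k * f + (?t * ?u - ?v) * (s_op k f - f)" by (rule T_eq)
  have E3: "dk k * T_op k (T_op k f) = ?t * dk k * T_op k f + (?t * ?u - ?v) * (s_op k (T_op k f) - T_op k f)" by (rule T_eq)
  have "s_op k (dk k * T_op k f) = s_op k (?t * dk k * f + (?t * ?u - ?v) * (s_op k f - f))"
    using E1 by simp
  then have "- dk k * s_op k (T_op k f) = ?t * (- dk k) * s_op k f + (?t * ?v - ?u) * (f - s_op k f)"
    by (simp add: s_mult s_add s_diff s_C s_xpow s_dk s_s sig_k sig_Sk)
  then have E2: "dk k * s_op k (T_op k f) = ?t * dk k * s_op k f - (?t * ?v - ?u) * (f - s_op k f)"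
    by (simp add: algebra_simps)
  have D: "dk k = ?u - ?v" by (simp add: dk_def)
  have "dk k * (dk k * T_op k (T_op k f)) = dk k * (dk k * ((?t - 1) * T_op k f + ?t * f))"
    using E1 E2 E3 D by algebra
  then show ?thesis using dk_cancel by blast
qed

lemma Ct_nz: "Cs tp \<noteq> 0" using tp_nz by (metis lookup_single_eq lookup_zero)

lemma tTinv: "Cs tp * Tinv_op k f = T_op k f + (1 - Cs tp) * f"
proof -
  have a: "Cs tp * Tinv_op k f = (Cs tp * Cs (inverse tp - 1)) * f + (Cs tp * Cs (inverse tp)) * T_op k f"
    unfolding Tinv_op_def scal_def by (simp add: algebra_simps)
  have b: "Cs tp * Cs (inverse tp - 1) = 1 - Cs tp"
    by (simp add: C_mult tp_nz right_diff_distrib C_diff C_one)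
  show ?thesis unfolding a b C_inv by simp
qed

lemma T_Tinv: "T_op k (Tinv_op k f) = f"
proof -
  have "Cs tp * T_op k (Tinv_op k f) = T_op k (Cs tp * Tinv_op k f)" by (simp add: T_C)
  also have "\<dots> = T_op k (T_op k f) + (1 - Cs tp) * T_op k f"
    by (simp add: tTinv T_add T_sym s_diff s_one s_C)
  also have "\<dots> = Cs tp * f" by (simp add: T_quad algebra_simps)
  finally show ?thesis using Ct_nz by simp
qed

lemma Tinv_T: "Tinv_op k (T_op k f) = f"
proof -
  have "Cs tp * Tinv_op k (T_op k f) = T_op k (T_op k f) + (1 - Cs tp) * T_op k f" by (simp add: tTinv)
  also have "\<dots> = Cs tp * f" by (simp add: T_quad algebra_simps)
  finally show ?thesis using Ct_nz by simp
qed

lemma Tinv_add: "Tinv_op k (f + g) = Tinv_op k f + Tinv_op k g"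
  unfolding Tinv_op_def scal_def by (simp add: T_add algebra_simps)

lemma Tinv_sym: assumes "s_op k g = g" shows "Tinv_op k (g * f) = g * Tinv_op k f"
  unfolding Tinv_op_def scal_def T_sym[OF assms] by (simp add: algebra_simps)

lemma T_E: "T_op k (xpow (Suc k) (-1) * g) = xpow k (-1) * (T_op k g + (1 - Cs tp) * g)"
proof (rule dk_cancel)
  let ?u = "xpow k 1" and ?v = "xpow (Suc k) 1" and ?t = "Cs tp"
    and ?ui = "xpow k (-1)" and ?vi = "xpow (Suc k) (-1)"
  have U: "?u * ?ui = 1" and V: "?v * ?vi = 1" by (simp_all add: xpow_inv)
  have E1: "dk k * T_op k g = ?t * dk k * g + (?t * ?u - ?v) * (s_op k g - g)" by (rule T_eq)
  have E2: "dk k * T_op k (?vi * g) = ?t * dk k * (?vi * g) + (?t * ?u - ?v) * (?ui * s_op k g - ?vi * g)"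
    by (simp add: T_eq s_mult s_xpow sig_Sk)
  have D: "dk k = ?u - ?v" by (simp add: dk_def)
  show "dk k * T_op k (?vi * g) = dk k * (?ui * (T_op k g + (1 - ?t) * g))"
    using U V E1 E2 D by algebra
qed

definition lin :: "lop \<Rightarrow> bool" where
  "lin F \<longleftrightarrow> (\<forall>f g. F (f + g) = F f + F g) \<and> (\<forall>c f. F (Cs c * f) = Cs c * F f)"
definition cm :: "lpoly \<Rightarrow> lop \<Rightarrow> bool" where
  "cm g F \<longleftrightarrow> (\<forall>f. F (g * f) = g * F f)"

lemma linD: "lin F \<Longrightarrow> F (f + g) = F f + F g" "lin F \<Longrightarrow> F (Cs c * f) = Cs c * F f"
  by (auto simp: lin_def)
lemma lin_zero: "lin F \<Longrightarrow> F 0 = 0"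
  using linD(2)[of F 0 0] by simp
lemma lin_minus: "lin F \<Longrightarrow> F (- f) = - F f"
  using linD(2)[of F "-1" f] by (simp add: single_uminus C_one)
lemma lin_diff: "lin F \<Longrightarrow> F (f - g) = F f - F g"
  using linD(1)[of F f "-g"] lin_minus[of F g] by simp
lemma lin_sum: "lin F \<Longrightarrow> F (\<Sum>j\<in>A. h j) = (\<Sum>j\<in>A. F (h j))"
  by (induction A rule: infinite_finite_induct) (auto simp: lin_zero linD)
lemma lin_comp: "lin F \<Longrightarrow> lin G \<Longrightarrow> lin (F \<circ> G)"
  by (simp add: lin_def)
lemma cm_comp: "cm g F \<Longrightarrow> cm g G \<Longrightarrow> cm g (F \<circ> G)"
  by (simp add: cm_def)

lemma opprod_Nil: "opprod [] = id" by (simp add: opprod_def)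
lemma opprod_Cons: "opprod (F # Fs) = F \<circ> opprod Fs" by (simp add: opprod_def)
lemma opprod_append: "opprod (Fs @ Gs) = opprod Fs \<circ> opprod Gs"
  by (induction Fs) (simp_all add: opprod_Nil opprod_Cons)

lemma lin_opprod: "(\<And>F. F \<in> set Fs \<Longrightarrow> lin F) \<Longrightarrow> lin (opprod Fs)"
  by (induction Fs) (auto simp: opprod_Nil opprod_Cons lin_def)
lemma cm_opprod: "(\<And>F. F \<in> set Fs \<Longrightarrow> cm g F) \<Longrightarrow> cm g (opprod Fs)"
  by (induction Fs) (auto simp: opprod_Nil opprod_Cons cm_def)

lemma lin_T: "lin (T_op k)" by (simp add: lin_def T_add T_C)
lemma lin_Tinv: "lin (Tinv_op k)"
  by (simp add: lin_def Tinv_add Tinv_sym s_C)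

lemma s_xpow_fix: "k \<noteq> n \<Longrightarrow> Suc k \<noteq> n \<Longrightarrow> s_op k (xpow n e) = xpow n e"
  by (simp add: s_xpow sig_def)
lemma cm_T: "k \<noteq> n \<Longrightarrow> Suc k \<noteq> n \<Longrightarrow> cm (xpow n e) (T_op k)"
  by (simp add: cm_def T_sym s_xpow_fix)
lemma cm_Tinv: "k \<noteq> n \<Longrightarrow> Suc k \<noteq> n \<Longrightarrow> cm (xpow n e) (Tinv_op k)"
  by (simp add: cm_def Tinv_sym s_xpow_fix)
lemma cm_s: "k \<noteq> n \<Longrightarrow> Suc k \<noteq> n \<Longrightarrow> cm (xpow n e) (s_op k)"
  by (simp add: cm_def s_mult s_xpow_fix)

lemma lin_Tinv_ij: "lin (Tinv_ij i j)"
  unfolding Tinv_ij_def by (rule lin_opprod) (auto simp: lin_Tinv)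
lemma cm_Tinv_ij: "0 < j \<Longrightarrow> j < n \<Longrightarrow> cm (xpow n e) (Tinv_ij i j)"
  unfolding Tinv_ij_def by (rule cm_opprod) (auto intro!: cm_Tinv)

lemma lookup_tau: "lk (tau_op i f) a = qp powi (lk a i) * lk f a"
proof -
  have "{a. qp powi (lk a i) * lk f a \<noteq> 0} \<subseteq> Poly_Mapping.keys f" by (auto simp: in_keys_iff)
  then have "finite {a. qp powi (lk a i) * lk f a \<noteq> 0}" by (rule finite_subset) simp
  then show ?thesis unfolding tau_op_def by simp
qed

lemma tau_X: assumes "n \<noteq> i" shows "tau_op i (xpow n e * g) = xpow n e * tau_op i g"
proof (rule poly_mapping_eqI)
  fix a
  have "lk (a - Poly_Mapping.single n e) i = lk a i" using assms by (simp add: lookup_minus lookup_single)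
  then show "lk (tau_op i (xpow n e * g)) a = lk (xpow n e * tau_op i g) a"
    by (simp add: xpow_def lookup_tau lookup_single_mult)
qed

lemma omega_X:
  assumes "2 \<le> n"
  shows "omega n (xpow n e * g) = xpow (n - 1) e * omega n g"
proof -
  obtain m where m: "n = Suc (Suc m)" using assms by (metis add_2_eq_Suc le_Suc_ex)
  have r: "rev [1..<n] = (n - 1) # rev [1..<n - 1]" unfolding m by simp
  have cm1: "cm (xpow n e) (opprod (map s_op (rev [1..<n - 1])))"
    by (rule cm_opprod) (auto intro!: cm_s)
  have "omega n (xpow n e * g) = s_op (n - 1) (opprod (map s_op (rev [1..<n - 1])) (tau_op 1 (xpow n e * g)))"
    unfolding omega_def r by (simp add: opprod_append opprod_Cons opprod_Nil)
  also have "\<dots> = s_op (n - 1) (xpow n e * opprod (map s_op (rev [1..<n - 1])) (tau_op 1 g))"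
    using assms cm1 by (simp add: tau_X cm_def)
  also have "\<dots> = xpow (n - 1) e * s_op (n - 1) (opprod (map s_op (rev [1..<n - 1])) (tau_op 1 g))"
    by (simp add: m s_mult s_xpow sig_def)
  also have "\<dots> = xpow (n - 1) e * omega n g"
    unfolding omega_def r by (simp add: opprod_append opprod_Cons opprod_Nil)
  finally show ?thesis .
qed

definition Aop :: "nat \<Rightarrow> nat \<Rightarrow> lop" where
  "Aop n i G = G + scal (inverse tp - 1) (\<Sum>j = i + 1..n. scal (tp ^ (j - i)) (Tinv_ij i j G))"
definition Ch :: "nat \<Rightarrow> nat \<Rightarrow> lop" where
  "Ch i m = opprod (map T_op [i..<m])"

lemma Ch_id: "Ch m m = id" by (simp add: Ch_def opprod_Nil)
lemma Ch_step: "i < m \<Longrightarrow> Ch i m v = T_op i (Ch (Suc i) m v)"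
  by (simp add: Ch_def upt_conv_Cons opprod_Cons)
lemma lin_Ch: "lin (Ch i m)" unfolding Ch_def by (rule lin_opprod) (auto simp: lin_T)

lemma Tinv_ij_base: "Tinv_ij i (Suc i) = Tinv_op i"
  by (simp add: Tinv_ij_def opprod_Nil opprod_Cons)
lemma Tinv_ij_step: "Suc i < j \<Longrightarrow> Tinv_ij i j G = Tinv_op i (Tinv_ij (Suc i) j (Tinv_op i G))"
proof -
  assume a: "Suc i < j"
  then have u: "[i..<j - 1] = i # [Suc i..<j - 1]" by (simp add: upt_conv_Cons)
  have "j - 1 - 1 = j - Suc 1" by simp
  show ?thesis unfolding Tinv_ij_def u by (simp add: opprod_append opprod_Cons opprod_Nil)
qed

lemma Aop_step:
  assumes "Suc i < n"
  shows "Aop n i G = G + Cs (inverse tp - 1) * (Cs tp * Tinv_op i G)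
           + Cs tp * Tinv_op i (Aop n (Suc i) (Tinv_op i G) - Tinv_op i G)"
proof -
  let ?S' = "\<Sum>j = Suc i + 1..n. Cs (tp ^ (j - Suc i)) * Tinv_ij (Suc i) j (Tinv_op i G)"
  have iv: "{i + 1..n} = insert (Suc i) {Suc i + 1..n}" using assms by auto
  have tm: "Cs (tp ^ (j - i)) * Tinv_ij i j G
      = Cs tp * Tinv_op i (Cs (tp ^ (j - Suc i)) * Tinv_ij (Suc i) j (Tinv_op i G))"
    if "j \<in> {Suc i + 1..n}" for j
  proof -
    have "tp ^ (j - i) = tp * tp ^ (j - Suc i)" using that
      by (simp add: power_Suc[symmetric] Suc_diff_Suc)
    then show ?thesis using that
      by (simp add: Tinv_ij_step linD[OF lin_Tinv] C_mult[symmetric] mult.assoc)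
  qed
  have "(\<Sum>j = i + 1..n. Cs (tp ^ (j - i)) * Tinv_ij i j G)
      = Cs tp * Tinv_op i G + Cs tp * Tinv_op i ?S'"
    unfolding iv using tm
    by (simp add: Tinv_ij_base lin_sum[OF lin_Tinv] sum_distrib_left)
  moreover have "Aop n (Suc i) (Tinv_op i G) - Tinv_op i G = Cs (inverse tp - 1) * ?S'"
    by (simp add: Aop_def scal_def sum_distrib_left)
  ultimately show ?thesis
    unfolding Aop_def scal_def
    by (simp add: linD[OF lin_Tinv] distrib_left mult.left_commute)
qed

lemma C_b: "Cs (inverse tp - 1) * Cs tp = 1 - Cs tp"
proof -
  have "(inverse tp - 1) * tp = 1 - tp" using tp_nz by (simp add: algebra_simps)
  then have "Cs ((inverse tp - 1) * tp) = Cs (1 - tp)" by simp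
  then show ?thesis by (simp only: C_mult[symmetric] C_diff C_one)
qed

lemma hecke:
  assumes "i < n"
  shows "Aop n i (Ch i (n - 1) (T_op (n - 1) u)) = Cs (tp ^ (n - i)) * Tinv_ij i n (Ch i (n - 1) u)"
  using assms
proof (induction "n - 1 - i" arbitrary: i u)
  case 0
  then have i: "i = n - 1" and n: "n = Suc i" by auto
  have b: "Cs (inverse tp - 1) * (Cs tp * u) = (1 - Cs tp) * u"
    by (simp only: mult.assoc[symmetric] C_b)
  have "Aop n i (T_op i u) = T_op i u + (1 - Cs tp) * u"
    unfolding Aop_def scal_def using b by (simp add: n Tinv_ij_base Tinv_T)
  then show ?case unfolding i[symmetric] by (simp add: Ch_id n Tinv_ij_base tTinv)
next
  case (Suc d)
  then have si: "Suc i < n" and d: "d = n - 1 - Suc i" by auto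
  let ?w = "Ch (Suc i) (n - 1) (T_op (n - 1) u)"
  have IH: "Aop n (Suc i) ?w = Cs (tp ^ (n - Suc i)) * Tinv_ij (Suc i) n (Ch (Suc i) (n - 1) u)"
    using Suc.hyps(1)[OF d si] .
  have Ch1: "Ch i (n - 1) v = T_op i (Ch (Suc i) (n - 1) v)" for v
    using si by (intro Ch_step) simp
  have b: "Cs (inverse tp - 1) * (Cs tp * v) = (1 - Cs tp) * v" for v
    by (simp only: mult.assoc[symmetric] C_b)
  have "Aop n i (T_op i ?w) = T_op i ?w + Cs (inverse tp - 1) * (Cs tp * ?w) + Cs tp * (Tinv_op i (Aop n (Suc i) ?w) - Tinv_op i ?w)"
    by (simp add: Aop_step[OF si] Tinv_T lin_diff[OF lin_Tinv])
  also have "\<dots> = T_op i ?w + (1 - Cs tp) * ?w + Cs tp * Tinv_op i (Aop n (Suc i) ?w) - Cs tp * Tinv_op i ?w"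
    by (simp only: b right_diff_distrib) (simp add: algebra_simps)
  also have "\<dots> = Cs tp * Tinv_op i (Aop n (Suc i) ?w)" by (simp add: tTinv)
  also have "\<dots> = Cs tp * Cs (tp ^ (n - Suc i)) * Tinv_op i (Tinv_ij (Suc i) n (Ch (Suc i) (n - 1) u))"
    unfolding IH by (simp add: linD[OF lin_Tinv] mult.assoc)
  also have "\<dots> = Cs (tp ^ (n - i)) * Tinv_ij i n (Ch i (n - 1) u)"
  proof -
    have "tp * tp ^ (n - Suc i) = tp ^ (n - i)" using si
      by (simp add: power_Suc[symmetric] Suc_diff_Suc)
    then show ?thesis using si unfolding Ch1 by (simp add: C_mult Tinv_ij_step Tinv_T)
  qed
  finally show ?case unfolding Ch1 .
qed


lemma lin_Aop: "lin (Aop n i)"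
  unfolding lin_def Aop_def scal_def
  by (simp add: linD[OF lin_Tinv_ij] distrib_left sum.distrib sum_distrib_left mult.left_commute)

lemma C_inv': "Cs (inverse tp) * Cs tp = 1" using C_inv by (simp add: mult.commute)

theorem lemma3p4:
  fixes n i :: nat and f :: lpoly
  assumes "n \<ge> 2" and "1 \<le> i" and "i < n" and "in_vars n f"
  shows "D_op n i (xpow n (-1) * f) - xpow n (-1) * D_op n i f
       = scal (tp ^ (2 * n - i - 1) * (inverse tp - 1))
           (xpow i (-1) * (xpow n (-1) * Tinv_ij i n (Y_op n i f)))"
proof -
  let ?X = "xpow n (-1)" and ?x' = "xpow (n - 1) (-1)" and ?xi = "xpow i (-1)"
  define P where "P = opprod (map Tinv_op [1..<i])"
  define c where "c = tp powi (int i - int n)"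
  define h where "h = omega n (P f)"
  define K where "K = T_op (n - 1) h"
  define G where "G = Y_op n i f"
  have n1: "Suc (n - 1) = n" using assms by simp
  have upt: "[i..<n] = [i..<n - 1] @ [n - 1]" using assms
    by (metis n1 Suc_le_eq diff_Suc_1 less_Suc_eq_le upt_Suc_append)
  have Yform: "Y_op n i g = Cs c * Ch i (n - 1) (T_op (n - 1) (omega n (P g)))" for g
    unfolding Y_op_def scal_def Ch_def P_def c_def upt
    by (simp add: opprod_append opprod_Cons opprod_Nil)
  have G: "G = Cs c * Ch i (n - 1) K"
    unfolding G_def K_def h_def by (rule Yform)
  have cmP: "cm ?X P" unfolding P_def
    by (rule cm_opprod) (use assms in \<open>auto intro!: cm_Tinv\<close>)
  have cmCh: "cm ?X (Ch i (n - 1))" unfolding Ch_def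
    by (rule cm_opprod) (use assms in \<open>auto intro!: cm_T\<close>)
  have oX: "omega n (P (?X * f)) = ?x' * h"
    using cmP omega_X[OF assms(1)] unfolding h_def cm_def by simp
  have EK: "T_op (n - 1) (?X * K) = ?x' * (Cs tp * h)"
  proof -
    have "T_op (n - 1) (?X * K) = ?x' * (T_op (n - 1) K + (1 - Cs tp) * K)"
      using T_E[of "n - 1" K] unfolding n1 .
    also have "T_op (n - 1) K + (1 - Cs tp) * K = Cs tp * h"
      unfolding K_def by (simp add: T_quad algebra_simps)
    finally show ?thesis .
  qed
  have xh: "?x' * h = Cs (inverse tp) * T_op (n - 1) (?X * K)"
    unfolding EK by (simp add: mult.left_commute mult.assoc[symmetric] C_inv' C_inv)
  have Txh: "T_op (n - 1) (?x' * h) = ?X * K + Cs (1 - inverse tp) * T_op (n - 1) (?X * K)"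
  proof -
    have "T_op (n - 1) (?x' * h) = Cs (inverse tp) * ((Cs tp - 1) * T_op (n - 1) (?X * K) + Cs tp * (?X * K))"
      unfolding xh by (simp add: T_C T_quad)
    also have "\<dots> = ?X * K + Cs (1 - inverse tp) * T_op (n - 1) (?X * K)"
    proof -
      have "Cs (1 - inverse tp) = 1 - Cs (inverse tp)" by (simp add: C_diff C_one)
      then show ?thesis using C_inv' by algebra
    qed
    finally show ?thesis .
  qed
  have YX: "Y_op n i (?X * f) = ?X * G + Cs (1 - inverse tp) * (Cs c * Ch i (n - 1) (T_op (n - 1) (?X * K)))"
    unfolding Yform oX Txh G
    using cmCh by (simp add: linD[OF lin_Ch] cm_def algebra_simps)
  have ChXK: "Cs c * Ch i (n - 1) (?X * K) = ?X * G"
    using cmCh unfolding G cm_def by (simp add: mult.left_commute)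
  have AYX: "Aop n i (Y_op n i (?X * f)) = Aop n i (?X * G)
       + Cs (1 - inverse tp) * Cs (tp ^ (n - i)) * Tinv_ij i n (?X * G)"
    unfolding YX linD[OF lin_Aop] hecke[OF assms(3)] ChXK[symmetric]
    by (simp add: linD[OF lin_Tinv_ij] mult.left_commute mult.assoc)
  define S1 where "S1 = (\<Sum>j\<in>{i + 1..<n}. Cs (tp ^ (j - i)) * Tinv_ij i j G)"
  have iv: "{i + 1..n} = insert n {i + 1..<n}" using assms by auto
  have AXG: "Aop n i (?X * G) = ?X * G + Cs (inverse tp - 1) * (?X * S1 + Cs (tp ^ (n - i)) * Tinv_ij i n (?X * G))"
  proof -
    have "(\<Sum>j\<in>{i + 1..<n}. Cs (tp ^ (j - i)) * Tinv_ij i j (?X * G)) = ?X * S1"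
      unfolding S1_def sum_distrib_left
    proof (rule sum.cong)
      fix j assume "j \<in> {i + 1..<n}"
      then have "cm ?X (Tinv_ij i j)" by (intro cm_Tinv_ij) auto
      then show "Cs (tp ^ (j - i)) * Tinv_ij i j (?X * G) = ?X * (Cs (tp ^ (j - i)) * Tinv_ij i j G)"
        unfolding cm_def by (simp add: mult.left_commute)
    qed simp
    then show ?thesis unfolding Aop_def scal_def iv by (simp add: add.commute)
  qed
  have AG: "Aop n i G = G + Cs (inverse tp - 1) * (S1 + Cs (tp ^ (n - i)) * Tinv_ij i n G)"
    unfolding Aop_def scal_def iv S1_def by (simp add: add.commute)
  have s1: "Cs (1 - inverse tp) = - Cs (inverse tp - 1)"
    by (metis C_diff minus_diff_eq)
  have s2: "Cs (tp ^ (2 * n - i - 1) * (inverse tp - 1)) = Cs (tp ^ (n - 1)) * Cs (inverse tp - 1) * Cs (tp ^ (n - i))"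
  proof -
    have "2 * n - i - 1 = (n - 1) + (n - i)" using assms by simp
    then show ?thesis by (simp add: C_mult power_add algebra_simps)
  qed
  have Dform: "D_op n i g = ?xi * (g - Cs (tp ^ (n - 1)) * Aop n i (Y_op n i g))" for g
    by (simp add: D_op_def Aop_def scal_def)
  show ?thesis
    unfolding Dform AYX G_def[symmetric] AXG AG s1 s2 scal_def
    by (simp add: algebra_simps)
qed

end
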